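(* Let $\alpha,\beta,p\in\mathbb{C}$ be constants and let $h,g:\mathbb{Z}^2\to\mathbb{C}$ satisfy $$\widehat{h}-\widetilde{h}=\widetilde{\widetilde{g}}-g,\qquad (h+\widetilde g)\,g=\beta^2-\alpha^2 .$$ Let $\varphi_1,\varphi_2:\mathbb{Z}^2\to\mathbb{C}$ be two linearly independent solutions of the Lax pair $$\widetilde{\widetilde{\varphi}}+h\,\widetilde{\varphi}+\alpha^2\varphi=p^2\varphi,\qquad \widehat{\varphi}=\widetilde{\varphi}-g\,\varphi .$$ Then there is a constant $\rho$ such that for all $n,m\in\mathbb{Z}$ $$\varphi_1\widetilde{\varphi}_2-\varphi_2\widetilde{\varphi}_1=\varphi_1\widehat{\varphi}_2-\varphi_2\widehat{\varphi}_1=\rho\,s^{2n}t^{2m},$$ where $s^2=\alpha^2-p^2$ and $t^2=\beta^2-p^2$.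
   Context: Shift notation: for a function $f$ on $\mathbb{Z}^2$ (variables $n,m$), $\widetilde f(n,m)=f(n+1,m)$, $\widehat f(n,m)=f(n,m+1)$, and combined accents denote composed shifts. *)

theory Defs
  imports Complex_Main
begin

end

theory Submission
  imports Defs
begin

lemma geom1:
  fixes f :: "int \<Rightarrow> complex"
  assumes st: "\<And>n. f (n + 1) = a * f n"
  shows "f n = f 0 * a powi n"
proof (cases "a = 0")
  case True
  have z: "f k = 0" for k using st[of "k - 1"] True by simp
  show ?thesis by (simp add: z)
next
  case False
  show ?thesis
  proof (induction n rule: int_induct[where k=0])
    case base
    then show ?case by simp
  next
    case (step1 i)
    then show ?case using st[of i] False by (simp add: power_int_add_1')
  next
    case (step2 i)
    have "f i = a * f (i - 1)" using st[of "i - 1"] by simp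
    hence "f (i - 1) = f i / a" using False by simp
    then show ?case using step2 False by (simp add: power_int_diff)
  qed
qed

theorem lemma2p1:
  fixes \<alpha> \<beta> p :: complex
    and h g \<phi>1 \<phi>2 :: "int \<Rightarrow> int \<Rightarrow> complex"
  assumes lat1: "\<And>n m. h n (m + 1) - h (n + 1) m = g (n + 2) m - g n m"
    and lat2: "\<And>n m. (h n m + g (n + 1) m) * g n m = \<beta>^2 - \<alpha>^2"
    and lax1_1: "\<And>n m. \<phi>1 (n + 2) m + h n m * \<phi>1 (n + 1) m + \<alpha>^2 * \<phi>1 n m = p^2 * \<phi>1 n m"
    and lax2_1: "\<And>n m. \<phi>1 n (m + 1) = \<phi>1 (n + 1) m - g n m * \<phi>1 n m"
    and lax1_2: "\<And>n m. \<phi>2 (n + 2) m + h n m * \<phi>2 (n + 1) m + \<alpha>^2 * \<phi>2 n m = p^2 * \<phi>2 n m"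
    and lax2_2: "\<And>n m. \<phi>2 n (m + 1) = \<phi>2 (n + 1) m - g n m * \<phi>2 n m"
    and indep: "\<And>a b :: complex. (\<forall>n m. a * \<phi>1 n m + b * \<phi>2 n m = 0) \<Longrightarrow> a = 0 \<and> b = 0"
  shows "\<exists>\<rho> :: complex. \<forall>n m.
           \<phi>1 n m * \<phi>2 (n + 1) m - \<phi>2 n m * \<phi>1 (n + 1) m
             = \<phi>1 n m * \<phi>2 n (m + 1) - \<phi>2 n m * \<phi>1 n (m + 1)
         \<and> \<phi>1 n m * \<phi>2 n (m + 1) - \<phi>2 n m * \<phi>1 n (m + 1)
             = \<rho> * (\<alpha>^2 - p^2) powi n * (\<beta>^2 - p^2) powi m"
proof -
  define W where "W n m = \<phi>1 n m * \<phi>2 (n + 1) m - \<phi>2 n m * \<phi>1 (n + 1) m" for n m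
  have eq1: "\<phi>1 n m * \<phi>2 n (m + 1) - \<phi>2 n m * \<phi>1 n (m + 1) = W n m" for n m
    unfolding W_def lax2_1 lax2_2 by (simp add: algebra_simps)
  have dd1: "\<phi>1 (n + 2) m = (p^2 - \<alpha>^2) * \<phi>1 n m - h n m * \<phi>1 (n + 1) m" for n m
    using lax1_1[of n m] by (simp add: algebra_simps)
  have dd2: "\<phi>2 (n + 2) m = (p^2 - \<alpha>^2) * \<phi>2 n m - h n m * \<phi>2 (n + 1) m" for n m
    using lax1_2[of n m] by (simp add: algebra_simps)
  have sn: "W (n + 1) m = (\<alpha>^2 - p^2) * W n m" for n m
  proof -
    have "W (n + 1) m = \<phi>1 (n + 1) m * \<phi>2 (n + 2) m - \<phi>2 (n + 1) m * \<phi>1 (n + 2) m"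
      unfolding W_def by (simp add: add.assoc)
    also have "\<dots> = (\<alpha>^2 - p^2) * W n m"
      unfolding dd1 dd2 W_def by (simp add: algebra_simps)
    finally show ?thesis .
  qed
  have sm: "W n (m + 1) = (\<beta>^2 - p^2) * W n m" for n m
  proof -
    have a: "\<phi>1 (n + 1) (m + 1) = (p^2 - \<alpha>^2) * \<phi>1 n m - (h n m + g (n + 1) m) * \<phi>1 (n + 1) m"
      using lax2_1[of "n + 1" m] dd1[of n m] by (simp add: add.assoc algebra_simps)
    have b: "\<phi>2 (n + 1) (m + 1) = (p^2 - \<alpha>^2) * \<phi>2 n m - (h n m + g (n + 1) m) * \<phi>2 (n + 1) m"
      using lax2_2[of "n + 1" m] dd2[of n m] by (simp add: add.assoc algebra_simps)
    have "W n (m + 1) = \<phi>1 n (m + 1) * \<phi>2 (n + 1) (m + 1) - \<phi>2 n (m + 1) * \<phi>1 (n + 1) (m + 1)"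
      unfolding W_def by simp
    also have "\<dots> = (\<alpha>^2 - p^2) * W n m + (h n m + g (n + 1) m) * g n m * W n m"
      unfolding a b lax2_1[of n m] lax2_2[of n m] W_def by (simp add: algebra_simps)
    also have "\<dots> = (\<beta>^2 - p^2) * W n m" unfolding lat2 by (simp add: algebra_simps)
    finally show ?thesis .
  qed
  have W0: "W n 0 = W 0 0 * (\<alpha>^2 - p^2) powi n" for n
    using geom1[of "\<lambda>n. W n 0"] sn by blast
  have Wm: "W n m = W n 0 * (\<beta>^2 - p^2) powi m" for n m
    using geom1[of "\<lambda>m. W n m"] sm by blast
  have Wall: "W n m = W 0 0 * (\<alpha>^2 - p^2) powi n * (\<beta>^2 - p^2) powi m" for n m
    using Wm[of n m] W0[of n] by simp
  show ?thesis
  proof (rule exI[of _ "W 0 0"], intro allI conjI)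
    fix n m
    show "\<phi>1 n m * \<phi>2 (n + 1) m - \<phi>2 n m * \<phi>1 (n + 1) m
             = \<phi>1 n m * \<phi>2 n (m + 1) - \<phi>2 n m * \<phi>1 n (m + 1)"
      using eq1[of n m] unfolding W_def by simp
    show "\<phi>1 n m * \<phi>2 n (m + 1) - \<phi>2 n m * \<phi>1 n (m + 1)
             = W 0 0 * (\<alpha>^2 - p^2) powi n * (\<beta>^2 - p^2) powi m"
      using eq1[of n m] Wall[of n m] by simp
  qed
qed

end
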